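(* Let $\mathbb{F}$ be a field, $p,q\in\mathbb{F}[t]$ monic of degree $2$, and $\mathcal{W}_{p,q}=\mathbb{F}\langle a,b\rangle/(p(a),q(b))$. An element $x\in\mathcal{W}_{p,q}$ is invertible if and only if $N(x)\in\mathbb{F}^\times$, where $N(x)=xx^\star$.
   Context: $\mathcal{W}_{p,q}$ is the free associative unital $\mathbb{F}$-algebra on two generators modulo the ideal generated by $p(a),q(b)$. For a $2$-dimensional algebra set $x^\star=\mathrm{tr}(x)-x$; the adjunction $x\mapsto x^\star$ of $\mathcal{W}_{p,q}$ is the unique $\mathbb{F}$-linear anti-automorphism agreeing with this on $\mathbb{F}[a]$ and $\mathbb{F}[b]$ (so $a^\star=\mathrm{tr}(p)-a$, $b^\star=\mathrm{tr}(q)-b$). The norm $N(x)=xx^\star=x^\star x$ lies in the center $\mathbb{F}[\omega]$, $\omega=ab^\star+ba^\star$, and is multiplicative. *)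

theory Defs
  imports "HOL-Computational_Algebra.Polynomial"
begin

text \<open>The free associative unital algebra F<a,b> is modelled by finitely supported
  coefficient functions on words over the alphabet bool (False = a, True = b).
  The quotient W_{p,q} = F<a,b>/(p(a),q(b)) is handled through the two-sided ideal
  generated by p(a) and q(b): elements of W are represented by free-algebra elements,
  equal in W iff their difference lies in the ideal.\<close>

type_synonym 'a fa = "bool list \<Rightarrow> 'a"

definition fin_supp :: "'a::zero fa \<Rightarrow> bool" where
  "fin_supp f \<longleftrightarrow> finite {w. f w \<noteq> 0}"

definition fone :: "'a::{zero,one} fa" where
  "fone = (\<lambda>w. if w = [] then 1 else 0)"

definition fscal :: "'a::zero \<Rightarrow> 'a fa" where
  "fscal c = (\<lambda>w. if w = [] then c else 0)"

definition fletter :: "bool \<Rightarrow> 'a::{zero,one} fa" where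
  "fletter l = (\<lambda>w. if w = [l] then 1 else 0)"

definition fadd :: "'a::plus fa \<Rightarrow> 'a fa \<Rightarrow> 'a fa" where
  "fadd f g = (\<lambda>w. f w + g w)"

definition fsub :: "'a::minus fa \<Rightarrow> 'a fa \<Rightarrow> 'a fa" where
  "fsub f g = (\<lambda>w. f w - g w)"

definition fmul :: "'a::comm_semiring_0 fa \<Rightarrow> 'a fa \<Rightarrow> 'a fa" where
  "fmul f g = (\<lambda>w. \<Sum>i\<le>length w. f (take i w) * g (drop i w))"

fun fpow :: "'a::comm_semiring_1 fa \<Rightarrow> nat \<Rightarrow> 'a fa" where
  "fpow f 0 = fone"
| "fpow f (Suc n) = fmul f (fpow f n)"

definition fpeval :: "'a::comm_semiring_1 poly \<Rightarrow> bool \<Rightarrow> 'a fa" where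
  "fpeval p l = (\<lambda>w. \<Sum>i\<le>degree p. coeff p i * fpow (fletter l) i w)"

inductive_set wideal :: "'a::comm_ring_1 poly \<Rightarrow> 'a poly \<Rightarrow> 'a fa set"
  for p q where
  zero: "(\<lambda>w. 0) \<in> wideal p q"
| gen_a: "fpeval p False \<in> wideal p q"
| gen_b: "fpeval q True \<in> wideal p q"
| add: "f \<in> wideal p q \<Longrightarrow> g \<in> wideal p q \<Longrightarrow> fadd f g \<in> wideal p q"
| mult_left: "fin_supp r \<Longrightarrow> f \<in> wideal p q \<Longrightarrow> fmul r f \<in> wideal p q"
| mult_right: "fin_supp r \<Longrightarrow> f \<in> wideal p q \<Longrightarrow> fmul f r \<in> wideal p q"

definition w_invertible :: "'a::comm_ring_1 poly \<Rightarrow> 'a poly \<Rightarrow> 'a fa \<Rightarrow> bool" where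
  "w_invertible p q x \<longleftrightarrow> (\<exists>y. fin_supp y \<and>
      fsub (fmul x y) fone \<in> wideal p q \<and> fsub (fmul y x) fone \<in> wideal p q)"

text \<open>Adjunction: a^* = tr(p) - a, b^* = tr(q) - b, where for monic quadratic
  p = t^2 + p_1 t + p_0 the trace of t in F[t]/(p) is -p_1; extended as an
  anti-automorphism.\<close>
definition lstar :: "'a::comm_ring_1 poly \<Rightarrow> 'a poly \<Rightarrow> bool \<Rightarrow> 'a fa" where
  "lstar p q l = fsub (fscal (- coeff (if l then q else p) 1)) (fletter l)"

fun wstar :: "'a::comm_ring_1 poly \<Rightarrow> 'a poly \<Rightarrow> bool list \<Rightarrow> 'a fa" where
  "wstar p q [] = fone"
| "wstar p q (l # w) = fmul (wstar p q w) (lstar p q l)"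

definition fstar :: "'a::comm_ring_1 poly \<Rightarrow> 'a poly \<Rightarrow> 'a fa \<Rightarrow> 'a fa" where
  "fstar p q x = (\<lambda>v. \<Sum>w\<in>{w. x w \<noteq> 0}. x w * wstar p q w v)"

definition wnorm :: "'a::comm_ring_1 poly \<Rightarrow> 'a poly \<Rightarrow> 'a fa \<Rightarrow> 'a fa" where
  "wnorm p q x = fmul x (fstar p q x)"

end

theory Submission
  imports Defs "HOL-Library.Poly_Mapping"
begin
datatype wd = Wd (unwd: "bool list")

instantiation wd :: monoid_add
begin
definition zero_wd :: wd where "zero_wd = Wd []"
definition plus_wd :: "wd \<Rightarrow> wd \<Rightarrow> wd" where "plus_wd a b = Wd (unwd a @ unwd b)"
instance by standard (auto simp: zero_wd_def plus_wd_def)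
end

lemma Wd_plus: "Wd u + Wd v = Wd (u @ v)" by (simp add: plus_wd_def)
lemma Wd_zero: "0 = Wd []" by (simp add: zero_wd_def)

abbreviation lk :: "('b \<Rightarrow>\<^sub>0 'a::zero) \<Rightarrow> 'b \<Rightarrow> 'a" where "lk \<equiv> Poly_Mapping.lookup"
abbreviation sg :: "'b \<Rightarrow> 'a::zero \<Rightarrow> ('b \<Rightarrow>\<^sub>0 'a)" where "sg \<equiv> Poly_Mapping.single"

definition toR :: "'a::zero fa \<Rightarrow> (wd \<Rightarrow>\<^sub>0 'a)" where
  "toR f = Abs_poly_mapping (\<lambda>k. f (unwd k))"
definition fromR :: "(wd \<Rightarrow>\<^sub>0 'a::zero) \<Rightarrow> 'a fa" where
  "fromR X = (\<lambda>w. lk X (Wd w))"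

lemma inj_unwd: "inj unwd" by (meson injI wd.expand)

lemma lookup_toR: "fin_supp f \<Longrightarrow> lk (toR f) = (\<lambda>k. f (unwd k))"
proof -
  assume "fin_supp f"
  then have "finite (unwd -` {w. f w \<noteq> 0})"
    using finite_vimageI[OF _ inj_unwd] fin_supp_def by blast
  then have "finite {k. f (unwd k) \<noteq> 0}" by (simp add: vimage_def)
  then show ?thesis unfolding toR_def by (simp add: Abs_poly_mapping_inverse)
qed

lemma fin_supp_fromR: "fin_supp (fromR X)"
proof -
  have "finite (Wd -` Poly_Mapping.keys X)"
    by (rule finite_vimageI) (auto simp: inj_def)
  then show ?thesis unfolding fin_supp_def fromR_def by (simp add: vimage_def in_keys_iff)
qed

lemma toR_fromR: "toR (fromR X) = X"
  by (rule poly_mapping_eqI) (simp add: lookup_toR fin_supp_fromR, simp add: fromR_def)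

lemma fromR_toR: "fin_supp f \<Longrightarrow> fromR (toR f) = f"
  by (simp add: fromR_def lookup_toR)

lemma toR_inj: "fin_supp f \<Longrightarrow> fin_supp g \<Longrightarrow> toR f = toR g \<Longrightarrow> f = g"
  by (metis fromR_toR)

lemma fin_supp_fadd: "fin_supp (f::'a::comm_ring_1 fa) \<Longrightarrow> fin_supp g \<Longrightarrow> fin_supp (fadd f g)"
  unfolding fin_supp_def fadd_def
  by (rule finite_subset[of _ "{w. f w \<noteq> 0} \<union> {w. g w \<noteq> 0}"]) auto

lemma fin_supp_fsub: "fin_supp (f::'a::comm_ring_1 fa) \<Longrightarrow> fin_supp g \<Longrightarrow> fin_supp (fsub f g)"
  unfolding fin_supp_def fsub_def
  by (rule finite_subset[of _ "{w. f w \<noteq> 0} \<union> {w. g w \<noteq> 0}"]) auto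

lemma fin_supp_fscal: "fin_supp (fscal c)"
  unfolding fin_supp_def fscal_def by (rule finite_subset[of _ "{[]}"]) auto
lemma fin_supp_fone: "fin_supp fone"
  unfolding fin_supp_def fone_def by (rule finite_subset[of _ "{[]}"]) auto
lemma fin_supp_fletter: "fin_supp (fletter l)"
  unfolding fin_supp_def fletter_def by (rule finite_subset[of _ "{[l]}"]) auto

lemma toR_fadd: assumes "fin_supp (f::'a::comm_ring_1 fa)" "fin_supp g" shows "toR (fadd f g) = toR f + toR g"
  by (rule poly_mapping_eqI) (unfold lookup_toR[OF fin_supp_fadd[OF assms]] lookup_add lookup_toR[OF assms(1)] lookup_toR[OF assms(2)], simp add: fadd_def)

lemma toR_fsub: assumes "fin_supp (f::'a::comm_ring_1 fa)" "fin_supp g" shows "toR (fsub f g) = toR f - toR g"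
  by (rule poly_mapping_eqI) (unfold lookup_toR[OF fin_supp_fsub[OF assms]] lookup_minus lookup_toR[OF assms(1)] lookup_toR[OF assms(2)], simp add: fsub_def)

lemma toR_fscal: "toR (fscal c) = sg 0 (c::'a::comm_ring_1)"
  by (rule poly_mapping_eqI) (unfold lookup_toR[OF fin_supp_fscal], auto simp:  lookup_single fscal_def Wd_zero when_def wd.expand)

lemma toR_fone: "toR fone = (1::wd \<Rightarrow>\<^sub>0 'a::comm_ring_1)"
  by (rule poly_mapping_eqI) (unfold lookup_toR[OF fin_supp_fone], auto simp:  lookup_one fone_def Wd_zero when_def wd.expand)

lemma toR_fletter: "toR (fletter l) = sg (Wd [l]) (1::'a::comm_ring_1)"
  by (rule poly_mapping_eqI) (unfold lookup_toR[OF fin_supp_fletter], auto simp:  lookup_single fletter_def when_def wd.expand)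


lemma lookup_toR_mult:
  fixes f g :: "'a::comm_ring_1 fa"
  assumes "fin_supp f" "fin_supp g"
  shows "lk (toR f * toR g) (Wd w) = (\<Sum>i\<le>length w. f (take i w) * g (drop i w))"
proof -
  have inner: "(\<Sum>q. g (unwd q) when Wd w = l + q) =
      (g (drop (length (unwd l)) w) when take (length (unwd l)) w = unwd l)" for l
  proof -
    have eq0: "(\<lambda>q. g (unwd q) when Wd w = l + q) =
        (\<lambda>q. (g (drop (length (unwd l)) w) when take (length (unwd l)) w = unwd l) when q = Wd (drop (length (unwd l)) w))"
      by (rule ext) (auto simp: when_def plus_wd_def append_eq_conv_conj[symmetric] wd.expand, metis append_take_drop_id)
    show ?thesis unfolding eq0 by (rule Sum_any_when_equal)
  qed
  define h where "h l = f (unwd l) * (g (drop (length (unwd l)) w) when take (length (unwd l)) w = unwd l)" for l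
  have "lk (toR f * toR g) (Wd w) = (\<Sum>l. h l)"
    unfolding lookup_mult lookup_toR[OF assms(1)] lookup_toR[OF assms(2)] inner h_def ..
  also have "\<dots> = sum h ((\<lambda>i. Wd (take i w)) ` {..length w})"
  proof (rule Sum_any.expand_superset)
    show "{a. h a \<noteq> 0} \<subseteq> (\<lambda>i. Wd (take i w)) ` {..length w}"
    proof
      fix l assume "l \<in> {a. h a \<noteq> 0}"
      then have e: "take (length (unwd l)) w = unwd l" by (auto simp: h_def when_def split: if_splits)
      then have "length (unwd l) \<le> length w" by (metis length_take min.absorb_iff2 min.commute)
      with e show "l \<in> (\<lambda>i. Wd (take i w)) ` {..length w}"
        by (auto intro!: image_eqI[of _ _ "length (unwd l)"] simp: wd.expand)
    qed
  qed simp
  also have "\<dots> = (\<Sum>i\<le>length w. h (Wd (take i w)))"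
  proof (rule sum.reindex[unfolded comp_def])
    show "inj_on (\<lambda>i. Wd (take i w)) {..length w}"
      by (rule inj_onI) (metis atMost_iff length_take min.absorb2 wd.inject)
  qed
  also have "\<dots> = (\<Sum>i\<le>length w. f (take i w) * g (drop i w))"
    by (rule sum.cong) (auto simp: h_def min_def)
  finally show ?thesis .
qed

lemma fmul_fromR:
  fixes f g :: "'a::comm_ring_1 fa"
  assumes "fin_supp f" "fin_supp g"
  shows "fmul f g = fromR (toR f * toR g)"
  by (rule ext) (simp add: fmul_def fromR_def lookup_toR_mult[OF assms])

lemma fin_supp_fmul: "fin_supp (f::'a::comm_ring_1 fa) \<Longrightarrow> fin_supp g \<Longrightarrow> fin_supp (fmul f g)"
  by (simp add: fmul_fromR fin_supp_fromR)

lemma toR_fmul: "fin_supp (f::'a::comm_ring_1 fa) \<Longrightarrow> fin_supp g \<Longrightarrow> toR (fmul f g) = toR f * toR g"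
  by (simp add: fmul_fromR toR_fromR)

lemma fin_supp_fpow: "fin_supp (f::'a::comm_ring_1 fa) \<Longrightarrow> fin_supp (fpow f n)"
  by (induction n) (auto simp: fin_supp_fone fin_supp_fmul)

lemma toR_fpow: "fin_supp (f::'a::comm_ring_1 fa) \<Longrightarrow> toR (fpow f n) = toR f ^ n"
  by (induction n) (auto simp: toR_fone toR_fmul fin_supp_fpow)

abbreviation sc :: "'a::comm_ring_1 \<Rightarrow> (wd \<Rightarrow>\<^sub>0 'a)" where "sc c \<equiv> sg 0 c"

lemma lookup_sc_mult: "lk (sc c * X) k = c * lk X k"
proof -
  have "lk (sc c * X) k = (\<Sum>l. (c * (\<Sum>q. lk X q when k = l + q)) when 0 = l)"
    by (simp add: lookup_mult lookup_single when_mult)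
  also have "\<dots> = c * lk X k" by (simp only: Sum_any_when_equal') simp
  finally show ?thesis .
qed

lemma lookup_mult_sc: "lk (X * sc c) k = lk X k * c"
proof -
  have i: "(\<Sum>aa. ((c when 0 = aa) when k = l + aa)) = (c when k = l)" for l
  proof -
    have e: "(\<lambda>aa. ((c when 0 = aa) when k = l + aa)) = (\<lambda>aa. (c when k = l) when aa = 0)"
      by (auto simp: when_def fun_eq_iff)
    show ?thesis unfolding e by (rule Sum_any_when_equal)
  qed
  have "lk (X * sc c) k = (\<Sum>l. lk X l * (c when k = l))"
    unfolding lookup_mult lookup_single i ..
  also have "\<dots> = (\<Sum>l. lk X l * c when k = l)" by (simp add: mult_when)
  also have "\<dots> = lk X k * c" by (simp only: Sum_any_when_equal')
  finally show ?thesis .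
qed

lemma sc_comm: "sc c * X = X * sc c"
  by (rule poly_mapping_eqI) (simp add: lookup_sc_mult lookup_mult_sc mult.commute)

lemma sc_mult: "sc a * sc b = sc (a * b)" by (simp add: mult_single)
lemma sc_add: "sc a + sc b = sc (a + b)" by (simp add: single_add)
lemma sc_diff: "sc a - sc b = sc (a - b)" by (simp add: single_diff)
lemma sc_uminus: "- sc a = sc (- a)" by (simp add: single_uminus)
lemma sc_one: "sc 1 = 1" by simp
lemma sc_zero: "sc 0 = 0" by simp

lemma poly_mapping_sum_singles: "(X::'b \<Rightarrow>\<^sub>0 'a::comm_monoid_add) = (\<Sum>k\<in>Poly_Mapping.keys X. sg k (lk X k))"
  by (rule poly_mapping_eqI)
    (auto simp: lookup_sum lookup_single when_def in_keys_iff sum.delta[OF finite_keys] split: if_splits)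

lemma R_induct:
  fixes X :: "'b \<Rightarrow>\<^sub>0 'a::comm_monoid_add"
  assumes "P 0" "\<And>k a. P (sg k a)" "\<And>X Y. P X \<Longrightarrow> P Y \<Longrightarrow> P (X + Y)"
  shows "P X"
proof -
  have "P (\<Sum>k\<in>S. sg k (lk X k))" if "finite S" for S
    using that by (induction S rule: finite_induct) (auto intro: assms)
  then show ?thesis by (metis finite_keys poly_mapping_sum_singles)
qed

definition word :: "bool list \<Rightarrow> (wd \<Rightarrow>\<^sub>0 'a::comm_ring_1)" where
  "word w = sg (Wd w) 1"

lemma word_Nil: "word [] = 1" by (simp add: word_def Wd_zero[symmetric])
lemma word_Cons: "word (l # w) = word [l] * word w" by (simp add: word_def mult_single Wd_plus)
lemma word_append: "word (u @ v) = word u * word v" by (simp add: word_def mult_single Wd_plus)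
lemma single_word: "sg k a = sc a * word (unwd k)"
  by (simp add: word_def mult_single Wd_zero[symmetric] add_0_left)

lemma toR_smul:
  fixes h :: "'a::comm_ring_1 fa"
  assumes "fin_supp h"
  shows "fin_supp (\<lambda>w. c * h w)" "toR (\<lambda>w. c * h w) = sc c * toR h"
proof -
  show fs: "fin_supp (\<lambda>w. c * h w)" using assms unfolding fin_supp_def
    by (rule finite_subset[rotated]) auto
  show "toR (\<lambda>w. c * h w) = sc c * toR h"
    by (rule poly_mapping_eqI) (simp add: lookup_sc_mult lookup_toR fs assms)
qed

lemma toR_lin:
  fixes h :: "'i \<Rightarrow> 'a::comm_ring_1 fa"
  assumes "finite S" "\<And>i. i \<in> S \<Longrightarrow> fin_supp (h i)"
  shows "fin_supp (\<lambda>w. \<Sum>i\<in>S. c i * h i w) \<and> toR (\<lambda>w. \<Sum>i\<in>S. c i * h i w) = (\<Sum>i\<in>S. sc (c i) * toR (h i))"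
  using assms
proof (induction S rule: finite_induct)
  case empty
  have "toR (\<lambda>w. 0::'a) = 0" by (rule poly_mapping_eqI) (simp add: lookup_toR fin_supp_def)
  then show ?case by (simp add: fin_supp_def)
next
  case (insert i S)
  let ?g = "\<lambda>w. \<Sum>i\<in>S. c i * h i w"
  have e: "(\<lambda>w. \<Sum>i\<in>insert i S. c i * h i w) = fadd (\<lambda>w. c i * h i w) ?g"
    using insert by (simp add: fadd_def)
  have IH: "fin_supp ?g" "toR ?g = (\<Sum>i\<in>S. sc (c i) * toR (h i))" using insert by auto
  have hi: "fin_supp (h i)" using insert by auto
  show ?case unfolding e using insert IH toR_smul[OF hi]
    by (simp add: fin_supp_fadd toR_fadd)
qed

inductive_set IR :: "'a::comm_ring_1 poly \<Rightarrow> 'a poly \<Rightarrow> (wd \<Rightarrow>\<^sub>0 'a) set" for p q where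
  zero: "0 \<in> IR p q"
| genP: "toR (fpeval p False) \<in> IR p q"
| genQ: "toR (fpeval q True) \<in> IR p q"
| add: "X \<in> IR p q \<Longrightarrow> Y \<in> IR p q \<Longrightarrow> X + Y \<in> IR p q"
| multl: "X \<in> IR p q \<Longrightarrow> r * X \<in> IR p q"
| multr: "X \<in> IR p q \<Longrightarrow> X * r \<in> IR p q"

lemma fpeval_eq: "fpeval p l = (\<lambda>w. \<Sum>i\<in>{..degree p}. coeff p i * fpow (fletter l) i w)"
  by (simp add: fpeval_def)

lemma fin_supp_fpeval: "fin_supp (fpeval (p::'a::comm_ring_1 poly) l)"
  unfolding fpeval_eq using toR_lin[of "{..degree p}" "\<lambda>i. fpow (fletter l) i" "coeff p"]
  by (simp add: fin_supp_fpow fin_supp_fletter)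

lemma toR_fpeval: "toR (fpeval (p::'a::comm_ring_1 poly) l) = (\<Sum>i\<le>degree p. sc (coeff p i) * sg (Wd [l]) 1 ^ i)"
  unfolding fpeval_eq using toR_lin[of "{..degree p}" "\<lambda>i. fpow (fletter l) i" "coeff p"]
  by (simp add: fin_supp_fpow fin_supp_fletter toR_fpow toR_fletter)

lemma wideal_toR: "f \<in> wideal p q \<Longrightarrow> fin_supp f \<and> toR f \<in> IR p q"
proof (induction rule: wideal.induct)
  case zero
  have "toR (\<lambda>w. 0::'a) = 0" by (rule poly_mapping_eqI) (simp add: lookup_toR fin_supp_def)
  then show ?case by (simp add: fin_supp_def IR.zero)
next
  case gen_a then show ?case by (simp add: fin_supp_fpeval IR.genP)
next
  case gen_b then show ?case by (simp add: fin_supp_fpeval IR.genQ)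
next
  case (add f g) then show ?case by (simp add: fin_supp_fadd toR_fadd IR.add)
next
  case (mult_left r f) then show ?case by (simp add: fin_supp_fmul toR_fmul IR.multl)
next
  case (mult_right r f) then show ?case by (simp add: fin_supp_fmul toR_fmul IR.multr)
qed

lemma IR_fromR: "X \<in> IR p q \<Longrightarrow> fromR X \<in> wideal p q"
proof (induction rule: IR.induct)
  case zero
  have "fromR (0::wd \<Rightarrow>\<^sub>0 'a) = (\<lambda>w. 0)" by (simp add: fromR_def)
  then show ?case by (simp add: wideal.zero)
next
  case genP then show ?case by (simp add: fromR_toR fin_supp_fpeval wideal.gen_a)
next
  case genQ then show ?case by (simp add: fromR_toR fin_supp_fpeval wideal.gen_b)
next
  case (add X Y)
  have "fromR (X + Y) = fadd (fromR X) (fromR Y)" by (simp add: fromR_def fadd_def lookup_add)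
  then show ?case using add by (simp add: wideal.add)
next
  case (multl X r)
  have "fromR (r * X) = fmul (fromR r) (fromR X)" by (simp add: fmul_fromR fin_supp_fromR toR_fromR)
  then show ?case using multl by (simp add: wideal.mult_left fin_supp_fromR)
next
  case (multr X r)
  have "fromR (X * r) = fmul (fromR X) (fromR r)" by (simp add: fmul_fromR fin_supp_fromR toR_fromR)
  then show ?case using multr by (simp add: wideal.mult_right fin_supp_fromR)
qed

lemma wideal_iff: "fin_supp f \<Longrightarrow> f \<in> wideal p q \<longleftrightarrow> toR f \<in> IR p q"
  using wideal_toR IR_fromR fromR_toR by metis

definition lstarR :: "'a::comm_ring_1 poly \<Rightarrow> 'a poly \<Rightarrow> bool \<Rightarrow> (wd \<Rightarrow>\<^sub>0 'a)" where
  "lstarR p q l = sc (- coeff (if l then q else p) 1) - word [l]"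

fun wstarR :: "'a::comm_ring_1 poly \<Rightarrow> 'a poly \<Rightarrow> bool list \<Rightarrow> (wd \<Rightarrow>\<^sub>0 'a)" where
  "wstarR p q [] = 1"
| "wstarR p q (l # w) = wstarR p q w * lstarR p q l"

definition starR :: "'a::comm_ring_1 poly \<Rightarrow> 'a poly \<Rightarrow> (wd \<Rightarrow>\<^sub>0 'a) \<Rightarrow> (wd \<Rightarrow>\<^sub>0 'a)" where
  "starR p q X = (\<Sum>k\<in>Poly_Mapping.keys X. sc (lk X k) * wstarR p q (unwd k))"

lemma fin_supp_lstar: "fin_supp (lstar p q l)"
  by (simp add: lstar_def fin_supp_fsub fin_supp_fscal fin_supp_fletter)

lemma toR_lstar: "toR (lstar p q l) = lstarR p q l"
  by (simp add: lstar_def lstarR_def toR_fsub fin_supp_fscal fin_supp_fletter toR_fscal toR_fletter word_def)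

lemma fin_supp_wstar: "fin_supp (wstar p q w)"
  by (induction w) (auto simp: fin_supp_fone fin_supp_fmul fin_supp_lstar)

lemma toR_wstar: "toR (wstar p q w) = wstarR p q w"
  by (induction w) (auto simp: toR_fone toR_fmul fin_supp_wstar fin_supp_lstar toR_lstar)

lemma fstar_toR:
  assumes "fin_supp x"
  shows "fin_supp (fstar p q x) \<and> toR (fstar p q x) = starR p q (toR x)"
proof -
  have fS: "finite {w. x w \<noteq> 0}" using assms fin_supp_def by blast
  have L: "fin_supp (fstar p q x) \<and> toR (fstar p q x) = (\<Sum>w\<in>{w. x w \<noteq> 0}. sc (x w) * wstarR p q w)"
    unfolding fstar_def using toR_lin[OF fS, of "wstar p q" x] by (simp add: fin_supp_wstar toR_wstar)
  have K: "Poly_Mapping.keys (toR x) = Wd ` {w. x w \<noteq> 0}"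
    by (auto simp: in_keys_iff lookup_toR assms image_iff) (metis wd.collapse)
  have "starR p q (toR x) = (\<Sum>w\<in>{w. x w \<noteq> 0}. sc (x w) * wstarR p q w)"
    unfolding starR_def K by (subst sum.reindex) (auto simp: inj_on_def lookup_toR assms)
  with L show ?thesis by simp
qed

lemma unwd_zero[simp]: "unwd 0 = []" by (simp add: zero_wd_def)

lemma starR_superset:
  assumes "finite S" "Poly_Mapping.keys X \<subseteq> S"
  shows "starR p q X = (\<Sum>k\<in>S. sc (lk X k) * wstarR p q (unwd k))"
  unfolding starR_def
  by (rule sum.mono_neutral_left) (auto simp: assms in_keys_iff)

lemma starR_add: "starR p q (X + Y) = starR p q X + starR p q Y"
proof -
  let ?S = "Poly_Mapping.keys X \<union> Poly_Mapping.keys Y"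
  have "starR p q (X + Y) = (\<Sum>k\<in>?S. sc (lk (X + Y) k) * wstarR p q (unwd k))"
    by (rule starR_superset) (auto simp: keys_add)
  also have "\<dots> = (\<Sum>k\<in>?S. sc (lk X k) * wstarR p q (unwd k)) + (\<Sum>k\<in>?S. sc (lk Y k) * wstarR p q (unwd k))"
    by (simp add: lookup_add single_add distrib_right sum.distrib)
  also have "\<dots> = starR p q X + starR p q Y"
    using starR_superset[of ?S X p q] starR_superset[of ?S Y p q] by simp
  finally show ?thesis .
qed

lemma starR_zero: "starR p q 0 = 0" by (simp add: starR_def)

lemma starR_single: "starR p q (sg k a) = sc a * wstarR p q (unwd k)"
  by (subst starR_superset[of "{k}"]) (auto simp: lookup_single)

lemma wstarR_append: "wstarR p q (u @ v) = wstarR p q v * wstarR p q u"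
  by (induction u) (auto simp: mult.assoc)

lemma starR_mult: "starR p q (X * Y) = starR p q Y * starR p q X"
proof (induction X arbitrary: Y rule: R_induct)
  case 1 then show ?case by (simp add: starR_zero)
next
  case (2 k a)
  show ?case
  proof (induction Y rule: R_induct)
    case 1 then show ?case by (simp add: starR_zero)
  next
    case (2 l b)
    have "starR p q (sg k a * sg l b) = sc (a * b) * (wstarR p q (unwd l) * wstarR p q (unwd k))"
      by (simp add: mult_single starR_single plus_wd_def wstarR_append)
    also have "\<dots> = (sc b * wstarR p q (unwd l)) * (sc a * wstarR p q (unwd k))"
    proof -
      have "(sc b * wstarR p q (unwd l)) * (sc a * wstarR p q (unwd k)) = sc b * ((wstarR p q (unwd l) * sc a) * wstarR p q (unwd k))"
        by (simp add: mult.assoc)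
      also have "\<dots> = sc b * ((sc a * wstarR p q (unwd l)) * wstarR p q (unwd k))"
        by (subst sc_comm[of a]) (rule refl)
      also have "\<dots> = sc (a * b) * (wstarR p q (unwd l) * wstarR p q (unwd k))"
        by (simp only: mult.assoc[symmetric] sc_mult mult.commute[of b a])
      finally show ?thesis by simp
    qed
    finally show ?case by (simp add: starR_single)
  next
    case (3 Y1 Y2) then show ?case by (simp add: distrib_left distrib_right starR_add)
  qed
next
  case (3 X1 X2) then show ?case by (simp add: distrib_left distrib_right starR_add)
qed

lemma starR_uminus: "starR p q (- X) = - starR p q X"
  using starR_add[of p q X "- X"] by (simp add: starR_zero eq_neg_iff_add_eq_0 add.commute)

lemma starR_diff: "starR p q (X - Y) = starR p q X - starR p q Y"
  using starR_add[of p q X "- Y"] by (simp add: starR_uminus)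

lemma starR_sc: "starR p q (sc c) = sc c"
  by (simp add: starR_single Wd_zero)

lemma starR_one: "starR p q 1 = 1"
  using starR_sc[of p q 1] by simp

lemma starR_word: "starR p q (word w) = wstarR p q w"
  by (simp add: word_def starR_single)

lemma starR_lstar: "starR p q (lstarR p q l) = word [l]"
  by (simp add: lstarR_def starR_diff starR_sc starR_word lstarR_def)

lemma starR_wstarR: "starR p q (wstarR p q w) = word w"
proof (induction w)
  case Nil then show ?case by (simp add: starR_one word_Nil)
next
  case (Cons l w) then show ?case by (simp add: starR_mult starR_lstar word_Cons[of l w])
qed

lemma starR_starR: "starR p q (starR p q X) = X"
proof (induction X rule: R_induct)
  case 1 then show ?case by (simp add: starR_zero)
next
  case (2 k a)
  have "starR p q (starR p q (sg k a)) = word (unwd k) * sc a"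
    by (simp add: starR_single starR_mult starR_wstarR starR_sc)
  also have "\<dots> = sg k a" by (subst single_word[of k a]) (rule sc_comm[symmetric])
  finally show ?case .
next
  case (3 X Y) then show ?case by (simp add: starR_add)
qed

datatype 'a m2 = M2 (e11: 'a) (e12: 'a) (e21: 'a) (e22: 'a)

lemma m2_eq_iff: "x = y \<longleftrightarrow> e11 x = e11 y \<and> e12 x = e12 y \<and> e21 x = e21 y \<and> e22 x = e22 y"
  by (cases x; cases y) auto

instantiation m2 :: (comm_ring_1) ring_1
begin
definition "zero_m2 = M2 0 0 0 0"
definition "one_m2 = M2 1 0 0 1"
definition "plus_m2 x y = M2 (e11 x + e11 y) (e12 x + e12 y) (e21 x + e21 y) (e22 x + e22 y)"
definition "minus_m2 x y = M2 (e11 x - e11 y) (e12 x - e12 y) (e21 x - e21 y) (e22 x - e22 y)"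
definition "uminus_m2 x = M2 (- e11 x) (- e12 x) (- e21 x) (- e22 x)"
definition "times_m2 x y = M2 (e11 x * e11 y + e12 x * e21 y) (e11 x * e12 y + e12 x * e22 y)
   (e21 x * e11 y + e22 x * e21 y) (e21 x * e12 y + e22 x * e22 y)"
instance by standard (simp_all add: m2_eq_iff zero_m2_def one_m2_def plus_m2_def minus_m2_def
    uminus_m2_def times_m2_def algebra_simps)
end

lemma m2_sel_simps:
  "e11 (0::'a::comm_ring_1 m2) = 0" "e12 (0::'a m2) = 0" "e21 (0::'a m2) = 0" "e22 (0::'a m2) = 0"
  "e11 (1::'a::comm_ring_1 m2) = 1" "e12 (1::'a m2) = 0" "e21 (1::'a m2) = 0" "e22 (1::'a m2) = 1"
  "e11 (x + y) = e11 x + e11 y" "e12 (x + y) = e12 x + e12 y" "e21 (x + y) = e21 x + e21 y" "e22 (x + y) = e22 x + e22 y"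
  "e11 (x - y) = e11 x - e11 y" "e12 (x - y) = e12 x - e12 y" "e21 (x - y) = e21 x - e21 y" "e22 (x - y) = e22 x - e22 y"
  "e11 (- x) = - e11 x" "e12 (- x) = - e12 x" "e21 (- x) = - e21 x" "e22 (- x) = - e22 x"
  "e11 (x * y) = e11 x * e11 y + e12 x * e21 y" "e12 (x * y) = e11 x * e12 y + e12 x * e22 y"
  "e21 (x * y) = e21 x * e11 y + e22 x * e21 y" "e22 (x * y) = e21 x * e12 y + e22 x * e22 y"
  by (simp_all add: zero_m2_def one_m2_def plus_m2_def minus_m2_def uminus_m2_def times_m2_def)

definition Dg :: "'a::comm_ring_1 \<Rightarrow> 'a m2" where "Dg c = M2 c 0 0 c"

lemma Dg_mult: "Dg a * Dg b = Dg (a * b)" by (simp add: m2_eq_iff m2_sel_simps Dg_def)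
lemma Dg_add: "Dg a + Dg b = Dg (a + b)" by (simp add: m2_eq_iff m2_sel_simps Dg_def)
lemma Dg_zero: "Dg 0 = 0" by (simp add: m2_eq_iff m2_sel_simps Dg_def)
lemma Dg_one: "Dg 1 = 1" by (simp add: m2_eq_iff m2_sel_simps Dg_def)
lemma Dg_comm: "Dg a * X = X * Dg a" by (simp add: m2_eq_iff m2_sel_simps Dg_def mult.commute)

definition Dgc :: "'a::comm_ring_1 \<Rightarrow> 'a poly m2" where "Dgc c = Dg [:c:]"
lemma Dgc_mult: "Dgc a * Dgc b = Dgc (a * b)" by (simp add: Dgc_def Dg_mult mult.commute)
lemma Dgc_add: "Dgc a + Dgc b = Dgc (a + b)" by (simp add: Dgc_def Dg_add)
lemma Dgc_zero: "Dgc 0 = 0" by (simp add: Dgc_def Dg_zero)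
lemma Dgc_one: "Dgc 1 = 1" by (simp add: Dgc_def Dg_one one_pCons[symmetric])
lemma Dgc_comm: "Dgc a * X = X * Dgc a" by (simp add: Dgc_def Dg_comm)

fun phiw :: "(bool \<Rightarrow> 'a::comm_ring_1 poly m2) \<Rightarrow> bool list \<Rightarrow> 'a poly m2" where
  "phiw L [] = 1"
| "phiw L (l # w) = L l * phiw L w"

definition phi :: "(bool \<Rightarrow> 'a::comm_ring_1 poly m2) \<Rightarrow> (wd \<Rightarrow>\<^sub>0 'a) \<Rightarrow> 'a poly m2" where
  "phi L X = (\<Sum>k\<in>Poly_Mapping.keys X. Dgc (lk X k) * phiw L (unwd k))"

lemma phi_superset:
  assumes "finite S" "Poly_Mapping.keys X \<subseteq> S"
  shows "phi L X = (\<Sum>k\<in>S. Dgc (lk X k) * phiw L (unwd k))"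
  unfolding phi_def
  by (rule sum.mono_neutral_left) (auto simp: assms in_keys_iff Dgc_zero)

lemma phi_add: "phi L (X + Y) = phi L X + phi L Y"
proof -
  let ?S = "Poly_Mapping.keys X \<union> Poly_Mapping.keys Y"
  have "phi L (X + Y) = (\<Sum>k\<in>?S. Dgc (lk (X + Y) k) * phiw L (unwd k))"
    by (rule phi_superset) (auto simp: keys_add)
  also have "\<dots> = (\<Sum>k\<in>?S. Dgc (lk X k) * phiw L (unwd k)) + (\<Sum>k\<in>?S. Dgc (lk Y k) * phiw L (unwd k))"
    by (simp add: lookup_add Dgc_add[symmetric] distrib_right sum.distrib)
  also have "\<dots> = phi L X + phi L Y"
    using phi_superset[of ?S X L] phi_superset[of ?S Y L] by simp
  finally show ?thesis .
qed

lemma phi_zero: "phi L 0 = 0" by (simp add: phi_def)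

lemma phi_single: "phi L (sg k a) = Dgc a * phiw L (unwd k)"
  by (subst phi_superset[of "{k}"]) (auto simp: lookup_single)

lemma phiw_append: "phiw L (u @ v) = phiw L u * phiw L v"
  by (induction u) (auto simp: mult.assoc)

lemma phi_mult: "phi L (X * Y) = phi L X * phi L Y"
proof (induction X arbitrary: Y rule: R_induct)
  case 1 then show ?case by (simp add: phi_zero)
next
  case (2 k a)
  show ?case
  proof (induction Y rule: R_induct)
    case 1 then show ?case by (simp add: phi_zero)
  next
    case (2 l b)
    have "phi L (sg k a * sg l b) = Dgc (a * b) * (phiw L (unwd k) * phiw L (unwd l))"
      by (simp add: mult_single phi_single plus_wd_def phiw_append)
    also have "\<dots> = (Dgc a * phiw L (unwd k)) * (Dgc b * phiw L (unwd l))"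
    proof -
      have "(Dgc a * phiw L (unwd k)) * (Dgc b * phiw L (unwd l)) = Dgc a * ((phiw L (unwd k) * Dgc b) * phiw L (unwd l))"
        by (simp add: mult.assoc)
      also have "\<dots> = Dgc a * ((Dgc b * phiw L (unwd k)) * phiw L (unwd l))"
        by (subst Dgc_comm[of b]) (rule refl)
      also have "\<dots> = Dgc (a * b) * (phiw L (unwd k) * phiw L (unwd l))"
        by (simp only: mult.assoc[symmetric] Dgc_mult)
      finally show ?thesis by simp
    qed
    finally show ?case by (simp add: phi_single)
  next
    case (3 Y1 Y2) then show ?case by (simp add: distrib_left distrib_right phi_add)
  qed
next
  case (3 X1 X2) then show ?case by (simp add: distrib_left distrib_right phi_add)
qed

lemma phi_uminus: "phi L (- X) = - phi L X"
  using phi_add[of L X "- X"] by (simp add: phi_zero eq_neg_iff_add_eq_0 add.commute)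

lemma phi_diff: "phi L (X - Y) = phi L X - phi L Y"
  using phi_add[of L X "- Y"] by (simp add: phi_uminus)

lemma phi_sc: "phi L (sc c) = Dgc c" by (simp add: phi_single)
lemma phi_one: "phi L 1 = 1" using phi_sc[of L 1] by (simp add: Dgc_one)
lemma phi_letter: "phi L (word [l]) = L l" by (simp add: word_def phi_single Dgc_one)

lemma phi_power: "phi L (X ^ n) = phi L X ^ n"
  by (induction n) (simp_all add: phi_one phi_mult)

lemma phi_sum: "phi L (sum f S) = (\<Sum>i\<in>S. phi L (f i))"
  by (induction S rule: infinite_finite_induct) (simp_all add: phi_zero phi_add)

lemma phi_IR:
  assumes "phi L (toR (fpeval p False)) = 0" "phi L (toR (fpeval q True)) = 0"
  shows "X \<in> IR p q \<Longrightarrow> phi L X = 0"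
  by (induction rule: IR.induct) (simp_all add: assms phi_zero phi_add phi_mult)

lemma sc_split: "sc (a * b) = sc a * sc b" by (simp add: mult_single)
lemma sc_right: "NO_MATCH (sg 0 d) X \<Longrightarrow> X * sc c = sc c * X" by (rule sc_comm[symmetric])
lemma sc_right2: "NO_MATCH (sg 0 d) X \<Longrightarrow> X * (sc c * Z) = sc c * (X * Z)"
  by (metis mult.assoc sc_comm)
lemma sc_lcomm: "sc a * (sc b * Z) = sc b * (sc a * Z)"
  by (metis mult.assoc sc_comm)
lemma sc_comm2: "sc a * sc b = sc b * sc a" by (rule sc_comm)

lemmas ncs = sc_split single_add single_diff single_uminus sc_right sc_right2 sc_lcomm sc_comm2 algebra_simps

lemma sum_atMost_2: "(\<Sum>i\<le>2::nat. f i) = f 0 + f 1 + f (2::nat)"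
  by (simp add: numeral_2_eq_2 atMost_Suc add.commute add.left_commute)

locale Wpq =
  fixes p q :: "'a::field poly"
  assumes dp: "degree p = 2" and lp: "coeff p 2 = 1"
    and dq: "degree q = 2" and lq: "coeff q 2 = 1"
begin

abbreviation A :: "wd \<Rightarrow>\<^sub>0 'a" where "A \<equiv> word [False]"
abbreviation B :: "wd \<Rightarrow>\<^sub>0 'a" where "B \<equiv> word [True]"
abbreviation st where "st \<equiv> starR p q"
abbreviation p0 where "p0 \<equiv> coeff p 0"
abbreviation p1 where "p1 \<equiv> coeff p 1"
abbreviation q0 where "q0 \<equiv> coeff q 0"
abbreviation q1 where "q1 \<equiv> coeff q 1"
abbreviation P where "P \<equiv> toR (fpeval p False)"
abbreviation Q where "Q \<equiv> toR (fpeval q True)"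

lemma P_eq: "P = sc p0 + sc p1 * A + A * A"
  by (simp add: toR_fpeval dp lp sum_atMost_2 word_def power2_eq_square)
lemma Q_eq: "Q = sc q0 + sc q1 * B + B * B"
  by (simp add: toR_fpeval dq lq sum_atMost_2 word_def power2_eq_square)

lemma st_A: "st A = - sc p1 - A" by (simp add: starR_word lstarR_def single_uminus)
lemma st_B: "st B = - sc q1 - B" by (simp add: starR_word lstarR_def single_uminus)

definition om where "om = A * st B + B * st A"
lemma om_eq: "om = - sc q1 * A - A * B - sc p1 * B - B * A"
  by (simp add: om_def st_A st_B ncs)

lemma st_P: "st P = P"
  by (simp add: P_eq starR_add starR_mult starR_sc st_A ncs)
lemma st_Q: "st Q = Q"
  by (simp add: Q_eq starR_add starR_mult starR_sc st_B ncs)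

lemma omA: "om * A - A * om = P * B - B * P"
  by (simp add: om_eq P_eq ncs)
lemma omB: "om * B - B * om = Q * A - A * Q"
  by (simp add: om_eq Q_eq ncs)


definition cg :: "(wd \<Rightarrow>\<^sub>0 'a) \<Rightarrow> (wd \<Rightarrow>\<^sub>0 'a) \<Rightarrow> bool" where
  "cg X Y \<longleftrightarrow> X - Y \<in> IR p q"

lemma IR_neg: "X \<in> IR p q \<Longrightarrow> - X \<in> IR p q"
  using IR.multl[of X p q "- 1"] by simp

lemma IR_diff: "X \<in> IR p q \<Longrightarrow> Y \<in> IR p q \<Longrightarrow> X - Y \<in> IR p q"
  using IR.add[OF _ IR_neg] by (metis diff_conv_add_uminus)

lemma cg_refl[simp, intro]: "cg X X" by (simp add: cg_def IR.zero)
lemma cg_eq: "X = Y \<Longrightarrow> cg X Y" by (simp add: cg_refl)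
lemma cg_sym: "cg X Y \<Longrightarrow> cg Y X"
  unfolding cg_def using IR_neg by fastforce
lemma cg_trans[trans]: "cg X Y \<Longrightarrow> cg Y Z \<Longrightarrow> cg X Z"
  unfolding cg_def using IR.add by fastforce
lemma cg_trans1[trans]: "cg X Y \<Longrightarrow> Y = Z \<Longrightarrow> cg X Z" by simp
lemma cg_trans2[trans]: "X = Y \<Longrightarrow> cg Y Z \<Longrightarrow> cg X Z" by simp
lemma cg_add: "cg X X' \<Longrightarrow> cg Y Y' \<Longrightarrow> cg (X + Y) (X' + Y')"
  unfolding cg_def using IR.add by (metis add_diff_add)
lemma cg_neg: "cg X X' \<Longrightarrow> cg (- X) (- X')"
  unfolding cg_def using IR_neg by (metis minus_diff_eq minus_diff_minus)
lemma cg_diff: "cg X X' \<Longrightarrow> cg Y Y' \<Longrightarrow> cg (X - Y) (X' - Y')"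
  using cg_add[OF _ cg_neg] by (metis diff_conv_add_uminus)
lemma cg_mult: "cg X X' \<Longrightarrow> cg Y Y' \<Longrightarrow> cg (X * Y) (X' * Y')"
proof -
  assume "cg X X'" "cg Y Y'"
  then have "(X - X') * Y + X' * (Y - Y') \<in> IR p q" unfolding cg_def by (intro IR.add IR.multl IR.multr)
  moreover have "(X - X') * Y + X' * (Y - Y') = X * Y - X' * Y'" by (simp add: algebra_simps)
  ultimately show ?thesis by (simp add: cg_def)
qed
lemma cg_IR: "X - Y \<in> IR p q \<Longrightarrow> cg X Y" by (simp add: cg_def)

lemma st_IR: "X \<in> IR p q \<Longrightarrow> st X \<in> IR p q"
proof (induction rule: IR.induct)
  case zero then show ?case by (simp add: starR_zero IR.zero)
next
  case genP then show ?case by (simp add: st_P IR.genP)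
next
  case genQ then show ?case by (simp add: st_Q IR.genQ)
next
  case (add X Y) then show ?case by (simp add: starR_add IR.add)
next
  case (multl X r) then show ?case by (simp add: starR_mult IR.multr)
next
  case (multr X r) then show ?case by (simp add: starR_mult IR.multl)
qed

lemma cg_st: "cg X Y \<Longrightarrow> cg (st X) (st Y)"
  unfolding cg_def using st_IR starR_diff by metis

lemma AA: "cg (A * A) (- sc p1 * A - sc p0)"
proof (rule cg_IR)
  show "A * A - (- sc p1 * A - sc p0) \<in> IR p q"
    using IR.genP[of p q] by (simp add: P_eq ncs)
qed
lemma BB: "cg (B * B) (- sc q1 * B - sc q0)"
proof (rule cg_IR)
  show "B * B - (- sc q1 * B - sc q0) \<in> IR p q"
    using IR.genQ[of q p] by (simp add: Q_eq ncs)
qed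

definition ctr :: "(wd \<Rightarrow>\<^sub>0 'a) \<Rightarrow> bool" where
  "ctr Z \<longleftrightarrow> (\<forall>X. cg (Z * X) (X * Z))"

lemma ctrD: "ctr Z \<Longrightarrow> cg (Z * X) (X * Z)" by (simp add: ctr_def)
lemma ctrD': "ctr Z \<Longrightarrow> cg (X * Z) (Z * X)" by (simp add: ctr_def cg_sym)

lemma ctr_intro:
  assumes a: "cg (Z * A) (A * Z)" and b: "cg (Z * B) (B * Z)"
  shows "ctr Z"
proof -
  have l: "cg (Z * word [l]) (word [l] * Z)" for l using a b by (cases l) auto
  have w: "cg (Z * word w) (word w * Z)" for w
  proof (induction w)
    case Nil then show ?case by (simp add: word_Nil)
  next
    case (Cons l w)
    have "Z * word (l # w) = (Z * word [l]) * word w" by (simp add: word_Cons[of l w] mult.assoc)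
    also have "cg \<dots> ((word [l] * Z) * word w)" by (intro cg_mult l cg_refl)
    also have "\<dots> = word [l] * (Z * word w)" by (simp add: mult.assoc)
    also have "cg \<dots> (word [l] * (word w * Z))" by (intro cg_mult Cons cg_refl)
    also have "\<dots> = word (l # w) * Z" by (simp add: word_Cons[of l w] mult.assoc)
    finally show ?case .
  qed
  show ?thesis unfolding ctr_def
  proof
    fix X show "cg (Z * X) (X * Z)"
    proof (induction X rule: R_induct)
      case 1 then show ?case by simp
    next
      case (2 k a)
      have "Z * sg k a = sc a * (Z * word (unwd k))" by (simp add: single_word[of k a] sc_right2)
      also have "cg \<dots> (sc a * (word (unwd k) * Z))" by (intro cg_mult w cg_refl)
      also have "\<dots> = sg k a * Z" by (simp add: single_word[of k a] mult.assoc)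
      finally show ?case .
    next
      case (3 X Y) then show ?case by (simp add: distrib_left distrib_right cg_add)
    qed
  qed
qed

lemma om_ctr: "ctr om"
proof (rule ctr_intro)
  show "cg (om * A) (A * om)"
    by (rule cg_IR) (simp add: omA IR_diff IR.multl IR.multr IR.genP)
  show "cg (om * B) (B * om)"
    by (rule cg_IR) (simp add: omB IR_diff IR.multl IR.multr IR.genQ)
qed

lemma sc_ctr: "ctr (sc c)" by (simp add: ctr_def sc_comm)

lemma ctr_add: "ctr Z1 \<Longrightarrow> ctr Z2 \<Longrightarrow> ctr (Z1 + Z2)"
  by (simp add: ctr_def distrib_left distrib_right cg_add)

lemma ctr_mult: "ctr Z1 \<Longrightarrow> ctr Z2 \<Longrightarrow> ctr (Z1 * Z2)"
  unfolding ctr_def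
proof
  fix X assume c1: "\<forall>X. cg (Z1 * X) (X * Z1)" and c2: "\<forall>X. cg (Z2 * X) (X * Z2)"
  have "Z1 * Z2 * X = Z1 * (Z2 * X)" by (simp add: mult.assoc)
  also have "cg \<dots> (Z1 * (X * Z2))" by (rule cg_mult[OF cg_refl]) (use c2 in auto)
  also have "\<dots> = (Z1 * X) * Z2" by (simp add: mult.assoc)
  also have "cg \<dots> ((X * Z1) * Z2)" by (rule cg_mult[OF _ cg_refl]) (use c1 in auto)
  finally show "cg (Z1 * Z2 * X) (X * (Z1 * Z2))" by (simp add: mult.assoc)
qed

lemma ctr_cg: "cg Z Z' \<Longrightarrow> ctr Z \<Longrightarrow> ctr Z'"
  unfolding ctr_def
proof
  fix X assume e: "cg Z Z'" and c: "\<forall>X. cg (Z * X) (X * Z)"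
  have "cg (Z' * X) (Z * X)" by (intro cg_mult cg_sym[OF e] cg_refl)
  also have "cg \<dots> (X * Z)" using c by auto
  also have "cg \<dots> (X * Z')" by (intro cg_mult e cg_refl)
  finally show "cg (Z' * X) (X * Z')" .
qed

definition polyw :: "'a poly \<Rightarrow> (wd \<Rightarrow>\<^sub>0 'a)" where
  "polyw f = fold_coeffs (\<lambda>c Y. sc c + om * Y) f 0"

lemma polyw_0[simp]: "polyw 0 = 0" by (simp add: polyw_def)
lemma polyw_pCons: "polyw (pCons c f) = sc c + om * polyw f"
  by (cases "f = 0 \<and> c = 0") (auto simp: polyw_def)

lemma polyw_add: "polyw (f + g) = polyw f + polyw g"
proof (induction f arbitrary: g rule: pCons_induct)
  case 0 then show ?case by simp
next
  case (pCons a f)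
  show ?case
  proof (cases g rule: pCons_cases)
    case (pCons b g')
    have "polyw (pCons a f + g) = sc (a + b) + om * polyw (f + g')" by (simp add: pCons polyw_pCons)
    also have "\<dots> = sc (a + b) + om * (polyw f + polyw g')" by (simp only: pCons.IH)
    finally show ?thesis by (simp add: pCons polyw_pCons ncs)
  qed
qed

lemma polyw_smult: "polyw (smult c f) = sc c * polyw f"
  by (induction f rule: pCons_induct) (simp_all add: polyw_pCons ncs)

lemma polyw_mult: "polyw (f * g) = polyw f * polyw g"
proof (induction f rule: pCons_induct)
  case 0 then show ?case by simp
next
  case (pCons a f)
  then show ?case by (simp add: polyw_pCons polyw_add polyw_smult ncs)
qed

lemma polyw_const: "polyw [:c:] = sc c" by (simp add: polyw_pCons)

lemma polyw_uminus: "polyw (- f) = - polyw f"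
  using polyw_smult[of "- 1" f] by (simp add: single_uminus)

lemma polyw_om: "polyw [:0, 1:] = om" by (simp add: polyw_pCons)

lemma polyw_ctr: "ctr (polyw f)"
proof (induction f rule: pCons_induct)
  case 0 then show ?case using sc_ctr[of 0] by simp
next
  case (pCons a f) then show ?case by (simp add: polyw_pCons ctr_add ctr_mult sc_ctr om_ctr)
qed

lemma polyw_om_comm: "polyw f * om = om * polyw f"
  by (induction f rule: pCons_induct) (simp_all add: polyw_pCons ncs)

lemma st_om: "st om = om"
  by (simp add: om_def starR_add starR_mult starR_starR add.commute)

lemma st_polyw: "st (polyw f) = polyw f"
  by (induction f rule: pCons_induct) (simp_all add: polyw_pCons starR_add starR_mult starR_sc st_om polyw_om_comm starR_zero)

definition inC :: "(wd \<Rightarrow>\<^sub>0 'a) \<Rightarrow> bool" where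
  "inC Y \<longleftrightarrow> (\<exists>f. cg Y (polyw f))"

lemma inC_sc: "inC (sc c)" unfolding inC_def by (metis polyw_const cg_refl)
lemma inC_one: "inC 1" using inC_sc[of 1] by simp
lemma inC_zero: "inC 0" using inC_sc[of 0] by simp
lemma inC_om: "inC om" unfolding inC_def by (metis polyw_om cg_refl)
lemma inC_add: "inC X \<Longrightarrow> inC Y \<Longrightarrow> inC (X + Y)"
  unfolding inC_def by (metis cg_add polyw_add)
lemma inC_mult: "inC X \<Longrightarrow> inC Y \<Longrightarrow> inC (X * Y)"
  unfolding inC_def by (metis cg_mult polyw_mult)
lemma inC_neg: "inC X \<Longrightarrow> inC (- X)"
  unfolding inC_def by (metis cg_neg polyw_uminus)
lemma inC_diff: "inC X \<Longrightarrow> inC Y \<Longrightarrow> inC (X - Y)"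
  by (metis diff_conv_add_uminus inC_add inC_neg)
lemma inC_cg: "cg X Y \<Longrightarrow> inC Y \<Longrightarrow> inC X"
  unfolding inC_def using cg_trans by blast
lemma inC_ctr: "inC X \<Longrightarrow> ctr X"
  unfolding inC_def by (metis ctr_cg cg_sym polyw_ctr)
lemma inC_st: "inC X \<Longrightarrow> cg (st X) X"
proof -
  assume "inC X"
  then obtain f where f: "cg X (polyw f)" by (auto simp: inC_def)
  have "cg (st X) (st (polyw f))" by (rule cg_st[OF f])
  also have "\<dots> = polyw f" by (rule st_polyw)
  also have "cg \<dots> X" by (rule cg_sym[OF f])
  finally show ?thesis .
qed

lemmas inC_intros = inC_sc inC_one inC_zero inC_om inC_add inC_mult inC_neg inC_diff

end

context Wpq
begin

definition spn :: "(wd \<Rightarrow>\<^sub>0 'a) \<Rightarrow> bool" where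
  "spn X \<longleftrightarrow> (\<exists>a b c d. inC a \<and> inC b \<and> inC c \<and> inC d \<and> cg X (a + b * A + c * B + d * (A * B)))"

lemma spnI: "cg X (a + b * A + c * B + d * (A * B)) \<Longrightarrow> inC a \<Longrightarrow> inC b \<Longrightarrow> inC c \<Longrightarrow> inC d \<Longrightarrow> spn X"
  unfolding spn_def by blast

lemma BA_eq: "B * A = - om - sc q1 * A - sc p1 * B - A * B"
  by (simp add: om_eq ncs)

lemma spn_A:
  assumes "inC a" "inC b" "inC c" "inC d"
  shows "spn (A * (a + b * A + c * B + d * (A * B)))"
proof (rule spnI)
  have ca: "ctr a" "ctr b" "ctr c" "ctr d" using assms inC_ctr by auto
  have "A * (a + b * A + c * B + d * (A * B)) = A * a + (A * b) * A + (A * c) * B + ((A * d) * A) * B"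
    by (simp add: algebra_simps)
  also have "cg \<dots> (a * A + (b * A) * A + (c * A) * B + ((d * A) * A) * B)"
    using ca by (intro cg_add cg_mult cg_refl ctrD')
  also have "\<dots> = a * A + b * (A * A) + c * A * B + d * (A * A) * B"
    by (simp add: mult.assoc)
  also have "cg \<dots> (a * A + b * (- sc p1 * A - sc p0) + c * A * B + d * (- sc p1 * A - sc p0) * B)"
    by (intro cg_add cg_mult cg_refl AA)
  also have "\<dots> = (- sc p0 * b) + (a - sc p1 * b) * A + (- sc p0 * d) * B + (c - sc p1 * d) * (A * B)"
    by (simp add: ncs)
  finally show "cg (A * (a + b * A + c * B + d * (A * B))) \<dots>" .
qed (intro inC_intros assms)+

lemma spn_B:
  assumes "inC a" "inC b" "inC c" "inC d"
  shows "spn (B * (a + b * A + c * B + d * (A * B)))"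
proof (rule spnI)
  have ca: "ctr a" "ctr b" "ctr c" "ctr d" using assms inC_ctr by auto
  have "B * (a + b * A + c * B + d * (A * B)) = B * a + (B * b) * A + (B * c) * B + ((B * d) * A) * B"
    by (simp add: algebra_simps)
  also have "cg \<dots> (a * B + (b * B) * A + (c * B) * B + ((d * B) * A) * B)"
    using ca by (intro cg_add cg_mult cg_refl ctrD')
  also have "\<dots> = a * B + b * (B * A) + c * (B * B) + d * (B * A) * B"
    by (simp add: mult.assoc)
  also have "\<dots> = a * B + b * (- om - sc q1 * A - sc p1 * B - A * B) + c * (B * B)
      + d * (- om * B - sc q1 * (A * B) - sc p1 * (B * B) - A * (B * B))"
    by (simp add: BA_eq ncs)
  also have "cg \<dots> (a * B + b * (- om - sc q1 * A - sc p1 * B - A * B) + c * (- sc q1 * B - sc q0)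
      + d * (- om * B - sc q1 * (A * B) - sc p1 * (- sc q1 * B - sc q0) - A * (- sc q1 * B - sc q0)))"
    by (intro cg_add cg_diff cg_mult cg_refl BB)
  also have "\<dots> = (- b * om - sc q0 * c + sc p1 * sc q0 * d) + (- sc q1 * b + sc q0 * d) * A
      + (a - sc p1 * b - sc q1 * c - d * om + sc p1 * sc q1 * d) * B + (- b) * (A * B)"
    by (simp add: ncs)
  finally show "cg (B * (a + b * A + c * B + d * (A * B))) \<dots>" .
qed (intro inC_intros assms)+

lemma spn_cg: "cg X Y \<Longrightarrow> spn Y \<Longrightarrow> spn X"
  unfolding spn_def using cg_trans by blast

lemma spn_letter_mult:
  assumes "spn X" shows "spn (word [l] * X)"
proof -
  obtain a b c d where i: "inC a" "inC b" "inC c" "inC d" and e: "cg X (a + b * A + c * B + d * (A * B))"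
    using assms spn_def by blast
  have "cg (word [l] * X) (word [l] * (a + b * A + c * B + d * (A * B)))"
    by (intro cg_mult cg_refl e)
  moreover have "spn (word [l] * (a + b * A + c * B + d * (A * B)))"
    using spn_A[OF i] spn_B[OF i] by (cases l) auto
  ultimately show ?thesis by (rule spn_cg)
qed

lemma spn_word: "spn (word w)"
proof (induction w)
  case Nil
  show ?case by (rule spnI[where a=1 and b=0 and c=0 and d=0]) (auto simp: word_Nil intro: inC_intros)
next
  case (Cons l w)
  then show ?case using spn_letter_mult[of "word w" l] by (simp add: word_Cons[of l w])
qed

lemma spn_all: "spn X"
proof (induction X rule: R_induct)
  case 1 show ?case by (rule spnI[where a=0 and b=0 and c=0 and d=0]) (auto intro: inC_intros)
next
  case (2 k e)
  obtain a b c d where i: "inC a" "inC b" "inC c" "inC d"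
    and eq: "cg (word (unwd k)) (a + b * A + c * B + d * (A * B))"
    using spn_word spn_def by blast
  have "cg (sg k e) (sc e * (a + b * A + c * B + d * (A * B)))"
    unfolding single_word[of k e] by (intro cg_mult cg_refl eq)
  also have "\<dots> = sc e * a + (sc e * b) * A + (sc e * c) * B + (sc e * d) * (A * B)"
    by (simp add: algebra_simps)
  finally show ?case by (rule spnI) (intro inC_intros i)+
next
  case (3 X Y)
  obtain a b c d where i: "inC a" "inC b" "inC c" "inC d"
    and eq: "cg X (a + b * A + c * B + d * (A * B))" using 3 spn_def by blast
  obtain a' b' c' d' where i': "inC a'" "inC b'" "inC c'" "inC d'"
    and eq': "cg Y (a' + b' * A + c' * B + d' * (A * B))" using 3 spn_def by blast
  have "cg (X + Y) ((a + b * A + c * B + d * (A * B)) + (a' + b' * A + c' * B + d' * (A * B)))"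
    by (intro cg_add eq eq')
  also have "\<dots> = (a + a') + (b + b') * A + (c + c') * B + (d + d') * (A * B)"
    by (simp add: algebra_simps)
  finally show ?case by (rule spnI) (intro inC_intros i i')+
qed

end

context Wpq
begin

definition T :: "(wd \<Rightarrow>\<^sub>0 'a) \<Rightarrow> (wd \<Rightarrow>\<^sub>0 'a)" where "T Z = Z + st Z"

lemma T_cg: "cg X Y \<Longrightarrow> cg (T X) (T Y)"
  unfolding T_def by (intro cg_add cg_st)

lemma T_add: "T (X + Y) = T X + T Y"
  by (simp add: T_def starR_add algebra_simps)

lemma T_inC_mult:
  assumes b: "inC b" and z: "inC (T Z)"
  shows "inC (T (b * Z))"
proof -
  have "T (b * Z) = b * Z + st Z * st b" by (simp add: T_def starR_mult)
  also have "cg \<dots> (b * Z + st Z * b)" by (intro cg_add cg_mult cg_refl inC_st b)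
  also have "cg \<dots> (b * Z + b * st Z)" using inC_ctr[OF b] by (intro cg_add cg_refl ctrD')
  also have "\<dots> = b * T Z" by (simp add: T_def algebra_simps)
  finally show ?thesis by (rule inC_cg) (intro inC_mult b z)
qed

lemma T_one: "inC (T 1)" unfolding T_def starR_one by (intro inC_intros)
lemma T_A: "inC (T A)" by (simp add: T_def st_A inC_intros)
lemma T_B: "inC (T B)" by (simp add: T_def st_B inC_intros)
lemma T_AB: "inC (T (A * B))"
proof -
  have "T (A * B) = sc p1 * sc q1 - om"
    by (simp add: T_def starR_mult st_A st_B om_eq ncs)
  then show ?thesis by (simp add: inC_intros)
qed

lemma inC_T: "inC (T X)"
proof -
  obtain a b c d where i: "inC a" "inC b" "inC c" "inC d"
    and eq: "cg X (a + b * A + c * B + d * (A * B))" using spn_all spn_def by blast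
  have "cg (T X) (T (a * 1) + T (b * A) + T (c * B) + T (d * (A * B)))"
    using T_cg[OF eq] by (simp add: T_add)
  moreover have "inC (T (a * 1) + T (b * A) + T (c * B) + T (d * (A * B)))"
    using i by (intro inC_add T_inC_mult T_one T_A T_B T_AB)
  ultimately show ?thesis by (rule inC_cg)
qed

lemma ctr_T: "ctr (T X)" using inC_T inC_ctr by blast

lemma T_swap: "cg (T (U * V)) (T (V * U))"
proof (rule cg_IR)
  have e: "T (U * V) - T (V * U) = (T V * T U - T U * T V) + (U * T V - T V * U) + (T U * V - V * T U)"
    by (simp add: T_def starR_mult algebra_simps)
  have "T V * T U - T U * T V \<in> IR p q" using ctrD[OF ctr_T, of V "T U"] by (simp add: cg_def)
  moreover have "U * T V - T V * U \<in> IR p q" using ctrD'[OF ctr_T, of U V] by (simp add: cg_def)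
  moreover have "T U * V - V * T U \<in> IR p q" using ctrD[OF ctr_T, of U V] by (simp add: cg_def)
  ultimately show "T (U * V) - T (V * U) \<in> IR p q" unfolding e by (intro IR.add)
qed

lemma letter_norm:
  "cg (word [l] * st (word [l])) (sc (if l then q0 else p0)) \<and> cg (st (word [l]) * word [l]) (sc (if l then q0 else p0))"
proof (cases l)
  case True
  have "B * st B - sc q0 = - Q" "st B * B - sc q0 = - Q" by (simp_all add: st_B Q_eq ncs)
  then show ?thesis using True IR_neg[OF IR.genQ[of q p]] by (simp add: cg_def)
next
  case False
  have "A * st A - sc p0 = - P" "st A * A - sc p0 = - P" by (simp_all add: st_A P_eq ncs)
  then show ?thesis using False IR_neg[OF IR.genP[of p q]] by (simp add: cg_def)
qed

lemma word_norm: "\<exists>c. cg (word w * st (word w)) (sc c) \<and> cg (st (word w) * word w) (sc c)"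
proof (induction w)
  case Nil
  show ?case by (rule exI[of _ 1]) (simp add: word_Nil starR_one)
next
  case (Cons l w)
  then obtain c where c: "cg (word w * st (word w)) (sc c)" "cg (st (word w) * word w) (sc c)" by blast
  define n where "n = (if l then q0 else p0)"
  have ln: "cg (word [l] * st (word [l])) (sc n)" "cg (st (word [l]) * word [l]) (sc n)"
    using letter_norm[of l] by (simp_all add: n_def)
  let ?L = "word [l]" and ?W = "word w"
  have "word (l # w) * st (word (l # w)) = ?L * (?W * st ?W) * st ?L"
    by (simp add: word_Cons[of l w] starR_mult mult.assoc)
  also have "cg \<dots> (?L * sc c * st ?L)" by (intro cg_mult cg_refl c)
  also have "\<dots> = sc c * (?L * st ?L)" by (simp add: ncs)
  also have "cg \<dots> (sc c * sc n)" by (intro cg_mult cg_refl ln)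
  finally have 1: "cg (word (l # w) * st (word (l # w))) (sc (c * n))" by (simp add: sc_split)
  have "st (word (l # w)) * word (l # w) = st ?W * (st ?L * ?L) * ?W"
    by (simp add: word_Cons[of l w] starR_mult mult.assoc)
  also have "cg \<dots> (st ?W * sc n * ?W)" by (intro cg_mult cg_refl ln)
  also have "\<dots> = sc n * (st ?W * ?W)" by (simp add: ncs)
  also have "cg \<dots> (sc n * sc c)" by (intro cg_mult cg_refl c)
  finally have 2: "cg (st (word (l # w)) * word (l # w)) (sc (c * n))" by (simp add: sc_split ncs)
  from 1 2 show ?case by blast
qed

lemma norm_inC: "\<exists>f. cg (X * st X) (polyw f) \<and> cg (st X * X) (polyw f)"
proof (induction X rule: R_induct)
  case 1 show ?case by (rule exI[of _ 0]) (simp add: starR_zero)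
next
  case (2 k a)
  obtain c where c: "cg (word (unwd k) * st (word (unwd k))) (sc c)" "cg (st (word (unwd k)) * word (unwd k)) (sc c)"
    using word_norm by blast
  let ?W = "word (unwd k)"
  have "sg k a * st (sg k a) = sc a * sc a * (?W * st ?W)"
    by (simp add: single_word[of k a] starR_mult starR_sc ncs)
  also have "cg \<dots> (sc a * sc a * sc c)" by (intro cg_mult cg_refl c)
  finally have 1: "cg (sg k a * st (sg k a)) (polyw [:a * a * c:])" by (simp add: polyw_const sc_split)
  have "st (sg k a) * sg k a = sc a * sc a * (st ?W * ?W)"
    by (simp add: single_word[of k a] starR_mult starR_sc ncs)
  also have "cg \<dots> (sc a * sc a * sc c)" by (intro cg_mult cg_refl c)
  finally have 2: "cg (st (sg k a) * sg k a) (polyw [:a * a * c:])" by (simp add: polyw_const sc_split)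
  from 1 2 show ?case by blast
next
  case (3 X Y)
  obtain f where f: "cg (X * st X) (polyw f)" "cg (st X * X) (polyw f)" using 3 by blast
  obtain g where g: "cg (Y * st Y) (polyw g)" "cg (st Y * Y) (polyw g)" using 3 by blast
  obtain h where h: "cg (T (X * st Y)) (polyw h)" using inC_T inC_def by blast
  have e1: "(X + Y) * st (X + Y) = X * st X + Y * st Y + T (X * st Y)"
    by (simp add: T_def starR_add starR_mult starR_starR algebra_simps)
  have e2: "st (X + Y) * (X + Y) = st X * X + st Y * Y + T (st Y * X)"
    by (simp add: T_def starR_add starR_mult starR_starR algebra_simps)
  have "cg (T (st Y * X)) (T (X * st Y))" by (rule T_swap)
  then have h2: "cg (T (st Y * X)) (polyw h)" using h cg_trans by blast
  have "cg ((X + Y) * st (X + Y)) (polyw (f + g + h))"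
    unfolding e1 polyw_add by (intro cg_add f g h)
  moreover have "cg (st (X + Y) * (X + Y)) (polyw (f + g + h))"
    unfolding e2 polyw_add by (intro cg_add f g h2)
  ultimately show ?case by blast
qed

end

context Wpq
begin

definition s0 :: "'a poly" where "s0 = [:0, 1:]"
definition Am :: "'a poly m2" where "Am = M2 0 (- [:p0:]) 1 (- [:p1:])"
definition Bm :: "'a poly m2" where "Bm = M2 s0 (s0 * (- [:q1:] - s0) - [:q0:]) 1 (- [:q1:] - s0)"
definition Lm :: "bool \<Rightarrow> 'a poly m2" where "Lm l = (if l then Bm else Am)"
definition cpoly :: "'a poly" where "cpoly = [:p0 + q0, q1 - p1, 1:]"

lemma phi_A: "phi Lm A = Am" by (simp add: phi_letter Lm_def)
lemma phi_B: "phi Lm B = Bm" by (simp add: phi_letter Lm_def)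

lemma phi_P: "phi Lm P = 0"
  by (simp add: P_eq phi_add phi_mult phi_sc phi_A Am_def Dgc_def Dg_def m2_eq_iff m2_sel_simps algebra_simps)

lemma phi_Q: "phi Lm Q = 0"
  by (simp add: Q_eq phi_add phi_mult phi_sc phi_B Bm_def Dgc_def Dg_def m2_eq_iff m2_sel_simps algebra_simps)

lemma phi_om: "phi Lm om = Dg cpoly"
  by (simp add: om_eq phi_add phi_diff phi_uminus phi_mult phi_sc phi_A phi_B Am_def Bm_def
      Dgc_def Dg_def m2_eq_iff m2_sel_simps algebra_simps cpoly_def s0_def)

lemma phi_cg: "cg X Y \<Longrightarrow> phi Lm X = phi Lm Y"
  using phi_IR[OF phi_P phi_Q] phi_diff unfolding cg_def by (metis eq_iff_diff_eq_0)

lemma phi_polyw: "phi Lm (polyw f) = Dg (pcompose f cpoly)"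
proof (induction f rule: pCons_induct)
  case 0 then show ?case by (simp add: phi_zero Dg_zero)
next
  case (pCons a f)
  then show ?case by (simp add: polyw_pCons phi_add phi_mult phi_sc phi_om Dgc_def Dg_mult Dg_add pcompose_pCons)
qed

lemma degree_cpoly: "degree cpoly = 2" by (simp add: cpoly_def)

lemma polyw_unit_const:
  assumes "cg (polyw h) 1" and "h = g * f"
  shows "\<exists>c. c \<noteq> 0 \<and> polyw f = sc c"
proof -
  have "Dg (pcompose h cpoly) = Dg 1"
    using phi_cg[OF assms(1)] by (simp add: phi_polyw phi_one Dg_one)
  then have pc: "pcompose h cpoly = 1" by (simp add: Dg_def)
  then have h0: "h \<noteq> 0" by auto
  have "degree (pcompose h cpoly) = degree h * degree cpoly" by (rule degree_pcompose)
  with pc degree_cpoly have "degree h = 0" by simp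
  with h0 assms(2) have f0: "f \<noteq> 0" "degree f = 0" by (auto simp: degree_mult_eq)
  then have "f = [:coeff f 0:]" by (metis degree_0_id)
  with f0 have "coeff f 0 \<noteq> 0" by (metis pCons_0_0)
  moreover have "polyw f = sc (coeff f 0)" by (subst \<open>f = _\<close>) (simp add: polyw_const)
  ultimately show ?thesis by blast
qed

theorem R_main: "(\<exists>Y. cg (X * Y) 1 \<and> cg (Y * X) 1) \<longleftrightarrow> (\<exists>c. c \<noteq> 0 \<and> cg (X * st X) (sc c))"
proof
  assume "\<exists>Y. cg (X * Y) 1 \<and> cg (Y * X) 1"
  then obtain Y where xy: "cg (X * Y) 1" by blast
  obtain f where f: "cg (X * st X) (polyw f)" using norm_inC by blast
  obtain g where g: "cg (Y * st Y) (polyw g)" using norm_inC by blast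
  have "cg 1 ((X * Y) * st (X * Y))"
  proof -
    have "cg (st (X * Y)) (st 1)" by (rule cg_st[OF xy])
    then have "cg ((X * Y) * st (X * Y)) (1 * 1)" using starR_one by (metis cg_mult xy)
    then show ?thesis by (simp add: cg_sym)
  qed
  also have "(X * Y) * st (X * Y) = X * (Y * st Y) * st X" by (simp add: starR_mult mult.assoc)
  also have "cg \<dots> (X * polyw g * st X)" by (intro cg_mult cg_refl g)
  also have "cg \<dots> (polyw g * X * st X)" by (intro cg_mult cg_refl ctrD' polyw_ctr)
  also have "\<dots> = polyw g * (X * st X)" by (simp add: mult.assoc)
  also have "cg \<dots> (polyw g * polyw f)" by (intro cg_mult cg_refl f)
  also have "\<dots> = polyw (g * f)" by (simp add: polyw_mult)
  finally have "cg (polyw (g * f)) 1" by (rule cg_sym)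
  then obtain c where "c \<noteq> 0" "polyw f = sc c" using polyw_unit_const by blast
  with f show "\<exists>c. c \<noteq> 0 \<and> cg (X * st X) (sc c)" by auto
next
  assume "\<exists>c. c \<noteq> 0 \<and> cg (X * st X) (sc c)"
  then obtain c where c0: "c \<noteq> 0" and c: "cg (X * st X) (sc c)" by blast
  obtain f where f: "cg (X * st X) (polyw f)" "cg (st X * X) (polyw f)" using norm_inC by blast
  define Y where "Y = sc (inverse c) * st X"
  have "X * Y = sc (inverse c) * (X * st X)" by (simp add: Y_def ncs)
  also have "cg \<dots> (sc (inverse c) * sc c)" by (intro cg_mult cg_refl c)
  also have "\<dots> = 1" using c0 by (simp add: mult_single)
  finally have 1: "cg (X * Y) 1" .
  have "Y * X = sc (inverse c) * (st X * X)" by (simp add: Y_def mult.assoc)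
  also have "cg \<dots> (sc (inverse c) * polyw f)" by (intro cg_mult cg_refl f)
  also have "cg \<dots> (sc (inverse c) * sc c)"
  proof (intro cg_mult cg_refl)
    show "cg (polyw f) (sc c)" using f(1) c cg_sym cg_trans by blast
  qed
  also have "\<dots> = 1" using c0 by (simp add: mult_single)
  finally have 2: "cg (Y * X) 1" .
  from 1 2 show "\<exists>Y. cg (X * Y) 1 \<and> cg (Y * X) 1" by blast
qed

end

theorem mainTheorem17:
  fixes p q :: "'a::field poly" and x :: "'a fa"
  assumes "degree p = 2" and "lead_coeff p = 1"
    and "degree q = 2" and "lead_coeff q = 1"
    and "fin_supp x"
  shows "w_invertible p q x \<longleftrightarrow>
           (\<exists>c. c \<noteq> 0 \<and> fsub (wnorm p q x) (fscal c) \<in> wideal p q)"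
proof -
  interpret Wpq p q using assms by unfold_locales auto
  let ?X = "toR x"
  have inv: "w_invertible p q x \<longleftrightarrow> (\<exists>Y. cg (?X * Y) 1 \<and> cg (Y * ?X) 1)"
  proof
    assume "w_invertible p q x"
    then obtain y where y: "fin_supp y" "fsub (fmul x y) fone \<in> wideal p q" "fsub (fmul y x) fone \<in> wideal p q"
      by (auto simp: w_invertible_def)
    have "toR (fsub (fmul x y) fone) = ?X * toR y - 1"
      using y assms(5) by (simp add: toR_fsub toR_fmul toR_fone fin_supp_fmul fin_supp_fone)
    moreover have "toR (fsub (fmul y x) fone) = toR y * ?X - 1"
      using y assms(5) by (simp add: toR_fsub toR_fmul toR_fone fin_supp_fmul fin_supp_fone)
    ultimately show "\<exists>Y. cg (?X * Y) 1 \<and> cg (Y * ?X) 1"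
      using y wideal_toR unfolding cg_def by metis
  next
    assume "\<exists>Y. cg (?X * Y) 1 \<and> cg (Y * ?X) 1"
    then obtain Y where Y: "cg (?X * Y) 1" "cg (Y * ?X) 1" by blast
    let ?y = "fromR Y"
    have fy: "fin_supp ?y" by (rule fin_supp_fromR)
    have "toR (fsub (fmul x ?y) fone) = ?X * Y - 1"
      using fy assms(5) by (simp add: toR_fsub toR_fmul toR_fone fin_supp_fmul fin_supp_fone toR_fromR)
    moreover have "toR (fsub (fmul ?y x) fone) = Y * ?X - 1"
      using fy assms(5) by (simp add: toR_fsub toR_fmul toR_fone fin_supp_fmul fin_supp_fone toR_fromR)
    ultimately have "fsub (fmul x ?y) fone \<in> wideal p q" "fsub (fmul ?y x) fone \<in> wideal p q"
      using Y fy assms(5) wideal_iff[of _ p q] unfolding cg_def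
      by (metis fin_supp_fmul fin_supp_fone fin_supp_fsub)+
    with fy show "w_invertible p q x" by (auto simp: w_invertible_def)
  qed
  have fs: "fin_supp (fstar p q x)" "toR (fstar p q x) = st ?X" using fstar_toR[OF assms(5)] by auto
  have nrm: "fsub (wnorm p q x) (fscal c) \<in> wideal p q \<longleftrightarrow> cg (?X * st ?X) (sc c)" for c
  proof -
    have fw: "fin_supp (fsub (wnorm p q x) (fscal c))"
      using fs assms(5) by (simp add: wnorm_def fin_supp_fsub fin_supp_fmul fin_supp_fscal)
    have "toR (fsub (wnorm p q x) (fscal c)) = ?X * st ?X - sc c"
      using fs assms(5) by (simp add: wnorm_def toR_fsub toR_fmul fin_supp_fmul fin_supp_fscal toR_fscal)
    then show ?thesis using wideal_iff[OF fw] by (simp add: cg_def)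
  qed
  show ?thesis using inv nrm R_main by simp
qed

end
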